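(* Let $B$ be a BDD and let $B^r$ be the reduced BDD for the same variable ordering with $X_{B^r}=X_B$ (so $|N^r_i|\le|N_i|$ for each layer $i$). Then the projection of $\mathcal{F}^{cap}(B^r)$ onto the $x$-variables is contained in the projection of $\mathcal{F}^{cap}(B)$ onto the $x$-variables.
   Context: A binary decision diagram (BDD) $B=(N,A)$ is a directed acyclic multigraph whose node set is partitioned into layers $N_1,\dots,N_{n+1}$ with $N_1=\{r\}$, $N_{n+1}=\{t\}$; every arc $a$ goes from $s(a)\in N_i$ to $t(a)\in N_{i+1}$ for some $i\in I=\{1,\dots,n\}$ and has label $v_a\in\{0,1\}$, each node having at most one outgoing arc of each label; layer $i$ corresponds to variable $x_i$. $X_B\subseteq\{0,1\}^n$ is the set of label vectors of $r$–$t$ paths. A BDD is reduced if it has the minimum number of nodes among all BDDs (with this layer/variable ordering) representing the same set; it is unique and obtained from any BDD for the set by merging equivalent nodes. $\mathcal{F}^{cap}(B)$ is the set of $(x,y)\in[0,1]^n\times\mathbb{R}^{|A|}_{\ge0}$ satisfying flow conservation $\sum_{a\in\delta^+(u)}y_a=\sum_{a\in\delta^-(u)}y_a$ for $u\in N\setminus\{r,t\}$, $\sum_{a\in\delta^+(r)}y_a=\sum_{a\in\delta^-(t)}y_a=1$, $y_a\le x_i$ for every arc $a$ with $s(a)\in N_i$, $v_a=1$, and $y_a\le1-x_i$ for every arc $a$ with $s(a)\in N_i$, $v_a=0$. *)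

theory Defs
  imports Complex_Main
begin

text \<open>A BDD with node type 'v and arc type 'a (arcs are objects, so parallel arcs are allowed).
  Layer i (1 \<le> i \<le> n) corresponds to variable x_i; bdd_layer assigns each node its layer.\<close>

record ('v, 'a) bdd =
  bdd_n     :: nat
  bdd_N     :: "'v set"
  bdd_A     :: "'a set"
  bdd_layer :: "'v \<Rightarrow> nat"
  bdd_src   :: "'a \<Rightarrow> 'v"
  bdd_tgt   :: "'a \<Rightarrow> 'v"
  bdd_label :: "'a \<Rightarrow> bool"
  bdd_root  :: 'v
  bdd_term  :: 'v

definition is_bdd :: "('v, 'a) bdd \<Rightarrow> bool" where
  "is_bdd B \<longleftrightarrow>
     finite (bdd_N B) \<and> finite (bdd_A B) \<and>
     (\<forall>u\<in>bdd_N B. bdd_layer B u \<in> {1..bdd_n B + 1}) \<and>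
     {u\<in>bdd_N B. bdd_layer B u = 1} = {bdd_root B} \<and>
     {u\<in>bdd_N B. bdd_layer B u = bdd_n B + 1} = {bdd_term B} \<and>
     (\<forall>a\<in>bdd_A B. bdd_src B a \<in> bdd_N B \<and> bdd_tgt B a \<in> bdd_N B \<and>
        bdd_layer B (bdd_src B a) \<in> {1..bdd_n B} \<and>
        bdd_layer B (bdd_tgt B a) = bdd_layer B (bdd_src B a) + 1) \<and>
     (\<forall>a\<in>bdd_A B. \<forall>b\<in>bdd_A B.
        bdd_src B a = bdd_src B b \<and> bdd_label B a = bdd_label B b \<longrightarrow> a = b)"

fun bdd_path :: "('v, 'a) bdd \<Rightarrow> 'v \<Rightarrow> 'v \<Rightarrow> 'a list \<Rightarrow> bool" where
  "bdd_path B u v [] \<longleftrightarrow> u = v"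
| "bdd_path B u v (a # p) \<longleftrightarrow>
     a \<in> bdd_A B \<and> bdd_src B a = u \<and> bdd_path B (bdd_tgt B a) v p"

text \<open>X_B: label vectors of root-terminal paths; list entry k (0-based) is the value of x_(k+1).\<close>
definition bdd_X :: "('v, 'a) bdd \<Rightarrow> bool list set" where
  "bdd_X B = {map (bdd_label B) p | p. bdd_path B (bdd_root B) (bdd_term B) p}"

text \<open>Reduced: minimum number of nodes among all BDDs with the same number of layers
  (same variable ordering) representing the same set.  Every finite BDD is isomorphic to
  one with nat nodes and nat arcs, so quantifying over those is quantifying over all BDDs.\<close>
definition is_reduced_bdd :: "('v, 'a) bdd \<Rightarrow> bool" where
  "is_reduced_bdd B \<longleftrightarrow> is_bdd B \<and>
     (\<forall>B' :: (nat, nat) bdd. is_bdd B' \<and> bdd_n B' = bdd_n B \<and> bdd_X B' = bdd_X B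
        \<longrightarrow> card (bdd_N B) \<le> card (bdd_N B'))"

definition out_arcs :: "('v, 'a) bdd \<Rightarrow> 'v \<Rightarrow> 'a set" where
  "out_arcs B u = {a\<in>bdd_A B. bdd_src B a = u}"

definition in_arcs :: "('v, 'a) bdd \<Rightarrow> 'v \<Rightarrow> 'a set" where
  "in_arcs B u = {a\<in>bdd_A B. bdd_tgt B a = u}"

text \<open>F^cap(B): x indexed by 1..n (other coordinates unconstrained), y indexed by arcs.\<close>
definition Fcap :: "('v, 'a) bdd \<Rightarrow> ((nat \<Rightarrow> real) \<times> ('a \<Rightarrow> real)) set" where
  "Fcap B = {(x, y).
     (\<forall>i\<in>{1..bdd_n B}. 0 \<le> x i \<and> x i \<le> 1) \<and>
     (\<forall>a\<in>bdd_A B. 0 \<le> y a) \<and>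
     (\<forall>u\<in>bdd_N B - {bdd_root B, bdd_term B}.
        (\<Sum>a\<in>out_arcs B u. y a) = (\<Sum>a\<in>in_arcs B u. y a)) \<and>
     (\<Sum>a\<in>out_arcs B (bdd_root B). y a) = 1 \<and>
     (\<Sum>a\<in>in_arcs B (bdd_term B). y a) = 1 \<and>
     (\<forall>a\<in>bdd_A B. bdd_label B a \<longrightarrow> y a \<le> x (bdd_layer B (bdd_src B a))) \<and>
     (\<forall>a\<in>bdd_A B. \<not> bdd_label B a \<longrightarrow> y a \<le> 1 - x (bdd_layer B (bdd_src B a)))}"

definition proj_x :: "('v, 'a) bdd \<Rightarrow> (nat \<Rightarrow> real) set" where
  "proj_x B = {x. \<exists>y. (x, y) \<in> Fcap B}"

end

theory Submission
  imports Defs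
begin


lemma bdd_facts:
  assumes "is_bdd B"
  shows "finite (bdd_N B)" "finite (bdd_A B)" "bdd_root B \<in> bdd_N B" "bdd_layer B (bdd_root B) = 1"
    "bdd_term B \<in> bdd_N B" "bdd_layer B (bdd_term B) = bdd_n B + 1"
    "\<And>u. u \<in> bdd_N B \<Longrightarrow> bdd_layer B u \<in> {1..bdd_n B + 1}"
    "\<And>u. u \<in> bdd_N B \<Longrightarrow> bdd_layer B u = 1 \<Longrightarrow> u = bdd_root B"
    "\<And>u. u \<in> bdd_N B \<Longrightarrow> bdd_layer B u = bdd_n B + 1 \<Longrightarrow> u = bdd_term B"
    "\<And>a. a \<in> bdd_A B \<Longrightarrow> bdd_src B a \<in> bdd_N B"
    "\<And>a. a \<in> bdd_A B \<Longrightarrow> bdd_tgt B a \<in> bdd_N B"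
    "\<And>a. a \<in> bdd_A B \<Longrightarrow> bdd_layer B (bdd_src B a) \<in> {1..bdd_n B}"
    "\<And>a. a \<in> bdd_A B \<Longrightarrow> bdd_layer B (bdd_tgt B a) = bdd_layer B (bdd_src B a) + 1"
    "\<And>a b. a \<in> bdd_A B \<Longrightarrow> b \<in> bdd_A B \<Longrightarrow> bdd_src B a = bdd_src B b \<Longrightarrow> bdd_label B a = bdd_label B b \<Longrightarrow> a = b"
  using assms unfolding is_bdd_def by (auto simp: set_eq_iff)

lemma path_append: "bdd_path B u v (p @ q) \<longleftrightarrow> (\<exists>w. bdd_path B u w p \<and> bdd_path B w v q)"
  by (induction p arbitrary: u) auto

lemma path_end_unique: "bdd_path B u v p \<Longrightarrow> bdd_path B u v' p \<Longrightarrow> v = v'"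
  by (induction p arbitrary: u) auto

lemma path_det:
  assumes "is_bdd B"
  shows "bdd_path B u v p \<Longrightarrow> bdd_path B u v' p' \<Longrightarrow> map (bdd_label B) p = map (bdd_label B) p' \<Longrightarrow> p = p' \<and> v = v'"
proof (induction p arbitrary: u p')
  case Nil
  then show ?case by auto
next
  case (Cons a p)
  then obtain a' q where p': "p' = a' # q" by (cases p') auto
  with Cons.prems have "a \<in> bdd_A B" "a' \<in> bdd_A B" "bdd_src B a = bdd_src B a'" "bdd_label B a = bdd_label B a'"
    by auto
  then have "a = a'" by (rule bdd_facts(14)[OF assms])
  with Cons p' show ?case by auto
qed

lemma path_layer:
  assumes "is_bdd B"
  shows "u \<in> bdd_N B \<Longrightarrow> bdd_path B u v p \<Longrightarrow> v \<in> bdd_N B \<and> bdd_layer B v = bdd_layer B u + length p"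
proof (induction p arbitrary: u)
  case Nil then show ?case by auto
next
  case (Cons a p)
  then have a: "a \<in> bdd_A B" "bdd_src B a = u" by auto
  then have "bdd_tgt B a \<in> bdd_N B" "bdd_layer B (bdd_tgt B a) = bdd_layer B u + 1"
    using bdd_facts(11,13)[OF assms a(1)] by auto
  with Cons show ?case by auto
qed

lemma X_length:
  assumes "is_bdd B" "s \<in> bdd_X B" shows "length s = bdd_n B"
proof -
  obtain p where "bdd_path B (bdd_root B) (bdd_term B) p" "s = map (bdd_label B) p"
    using assms(2) unfolding bdd_X_def by auto
  then have "bdd_layer B (bdd_term B) = bdd_layer B (bdd_root B) + length p"
    using path_layer[OF assms(1) bdd_facts(3)[OF assms(1)]] by blast
  then show ?thesis using bdd_facts(4,6)[OF assms(1)] \<open>s = _\<close> by simp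
qed

definition suff :: "('v, 'a) bdd \<Rightarrow> 'v \<Rightarrow> bool list set" where
  "suff B u = {map (bdd_label B) s | s. bdd_path B u (bdd_term B) s}"

definition useful :: "('v, 'a) bdd \<Rightarrow> 'v \<Rightarrow> bool" where
  "useful B u \<longleftrightarrow> (\<exists>p q. bdd_path B (bdd_root B) u p \<and> bdd_path B u (bdd_term B) q)"

lemma suff_res:
  assumes "is_bdd B" "bdd_path B (bdd_root B) u p"
  shows "suff B u = {t. map (bdd_label B) p @ t \<in> bdd_X B}"
proof (intro set_eqI iffI)
  fix t assume "t \<in> suff B u"
  then obtain s where "bdd_path B u (bdd_term B) s" "t = map (bdd_label B) s" unfolding suff_def by auto
  with assms(2) show "t \<in> {t. map (bdd_label B) p @ t \<in> bdd_X B}"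
    unfolding bdd_X_def by (auto intro!: exI[of _ "p @ s"] simp: path_append)
next
  fix t assume "t \<in> {t. map (bdd_label B) p @ t \<in> bdd_X B}"
  then obtain P where P: "bdd_path B (bdd_root B) (bdd_term B) P" "map (bdd_label B) p @ t = map (bdd_label B) P"
    unfolding bdd_X_def by auto
  define P1 P2 where "P1 = take (length p) P" and "P2 = drop (length p) P"
  have "P = P1 @ P2" unfolding P1_def P2_def by simp
  with P(1) obtain w where w: "bdd_path B (bdd_root B) w P1" "bdd_path B w (bdd_term B) P2"
    using path_append by metis
  have l: "map (bdd_label B) P1 = map (bdd_label B) p" "map (bdd_label B) P2 = t"
    using P(2) unfolding P1_def P2_def
    by (metis append_eq_conv_conj length_map take_map drop_map)+
  have "w = u" using path_det[OF assms(1) w(1) assms(2) l(1)] by simp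
  with w l show "t \<in> suff B u" unfolding suff_def by auto
qed



definition res :: "bool list set \<Rightarrow> bool list \<Rightarrow> bool list set" where
  "res L p = {t. p @ t \<in> L}"

lemma res_res[simp]: "res (res L p) q = res L (p @ q)"
  unfolding res_def by simp

definition cV :: "nat \<Rightarrow> bool list set \<Rightarrow> (nat \<times> bool list set) set" where
  "cV n X = (\<lambda>(x,k). (k, res X (take k x))) ` (X \<times> {0..n})"

definition canon :: "nat \<Rightarrow> bool list set \<Rightarrow> (nat \<times> bool list set, (nat \<times> bool list set) \<times> bool) bdd" where
  "canon n X = \<lparr> bdd_n = n, bdd_N = cV n X,
     bdd_A = {(v,b). v \<in> cV n X \<and> fst v < n \<and> res (snd v) [b] \<noteq> {}},
     bdd_layer = \<lambda>v. fst v + 1, bdd_src = fst, bdd_tgt = \<lambda>(v,b). (fst v + 1, res (snd v) [b]),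
     bdd_label = snd, bdd_root = (0, X), bdd_term = (n, {[]}) \<rparr>"

lemma cV_iff:
  assumes len: "\<forall>x\<in>X. length x = n"
  shows "(k,S) \<in> cV n X \<longleftrightarrow> (\<exists>p. k = length p \<and> S = res X p \<and> S \<noteq> {})"
proof
  assume "(k,S) \<in> cV n X"
  then obtain x where x: "x \<in> X" "k \<le> n" "S = res X (take k x)" unfolding cV_def by auto
  have "drop k x \<in> S" using x unfolding res_def by simp
  moreover have "length (take k x) = k" using x len by auto
  ultimately show "\<exists>p. k = length p \<and> S = res X p \<and> S \<noteq> {}" using x
    by (intro exI[of _ "take k x"]) auto
next
  assume "\<exists>p. k = length p \<and> S = res X p \<and> S \<noteq> {}"
  then obtain p t where p: "k = length p" "S = res X p" "p @ t \<in> X" unfolding res_def by auto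
  then have "k \<le> n" using len by force
  then show "(k,S) \<in> cV n X" unfolding cV_def using p
    by (auto intro!: image_eqI[of _ _ "(p@t, k)"])
qed

lemma cV_len:
  assumes len: "\<forall>x\<in>X. length x = n" and "(k,S) \<in> cV n X" "t \<in> S"
  shows "length t + k = n"
  using assms cV_iff[OF len] unfolding res_def by force

lemma cV_n:
  assumes len: "\<forall>x\<in>X. length x = n" and "(n,S) \<in> cV n X"
  shows "S = {[]}"
proof -
  have "\<And>t. t \<in> S \<Longrightarrow> t = []" using cV_len[OF len assms(2)] by auto
  moreover have "S \<noteq> {}" using assms cV_iff[OF len] by auto
  ultimately show ?thesis by auto
qed

lemma canon_bdd:
  assumes len: "\<forall>x\<in>X. length x = n" and fin: "finite X" and ne: "X \<noteq> {}"
  shows "is_bdd (canon n X)"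
proof -
  have finV: "finite (cV n X)" unfolding cV_def using fin by auto
  have finA: "finite {(v,b). v \<in> cV n X \<and> fst v < n \<and> res (snd v) [b] \<noteq> {}}"
    by (rule finite_subset[of _ "cV n X \<times> UNIV"]) (use finV in auto)
  have root: "(0,X) \<in> cV n X" using cV_iff[OF len, of 0 X] ne by (auto simp: res_def)
  obtain x0 where x0: "x0 \<in> X" using ne by auto
  have trm: "(n,{[]}) \<in> cV n X" using cV_iff[OF len, of n "{[]}"]
    using x0 len cV_n[OF len] by (metis cV_iff[OF len] empty_iff res_def append_Nil2 mem_Collect_eq)
  have layer: "\<And>k S. (k,S) \<in> cV n X \<Longrightarrow> k \<le> n"
    using cV_iff[OF len] cV_len[OF len] by (metis ex_in_conv le_add2)
  have l1: "\<And>S. (0,S) \<in> cV n X \<Longrightarrow> S = X" using cV_iff[OF len] unfolding res_def by auto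
  have arcs: "\<And>k S b. (k,S) \<in> cV n X \<Longrightarrow> res S [b] \<noteq> {} \<Longrightarrow> (k+1, res S [b]) \<in> cV n X"
  proof -
    fix k S b assume a: "(k,S) \<in> cV n X" "res S [b] \<noteq> {}"
    then obtain p where "k = length p" "S = res X p" using cV_iff[OF len] by auto
    then show "(k+1, res S [b]) \<in> cV n X" using cV_iff[OF len, of "k+1" "res S [b]"] a
      by (auto intro!: exI[of _ "p @ [b]"])
  qed
  have det: "\<forall>a\<in>{(v,b). v \<in> cV n X \<and> fst v < n \<and> res (snd v) [b] \<noteq> {}}.
        \<forall>b\<in>{(v,b). v \<in> cV n X \<and> fst v < n \<and> res (snd v) [b] \<noteq> {}}.
        fst a = fst b \<and> snd a = snd b \<longrightarrow> a = b" by (simp add: prod_eq_iff)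
  have ar: "\<forall>a\<in>{(v,b). v \<in> cV n X \<and> fst v < n \<and> res (snd v) [b] \<noteq> {}}.
        fst a \<in> cV n X \<and> (\<lambda>(v,b). (fst v + 1, res (snd v) [b])) a \<in> cV n X \<and>
        fst (fst a) + 1 \<in> {1..n} \<and> fst ((\<lambda>(v,b). (fst v + 1, res (snd v) [b])) a) + 1 = fst (fst a) + 1 + 1"
    using arcs by auto
  have lay: "\<forall>u\<in>cV n X. fst u + 1 \<in> {1..n+1}" using layer by auto
  have s1: "{u \<in> cV n X. fst u + 1 = 1} = {(0,X)}" using root l1 by (auto; metis)
  have s2: "{u \<in> cV n X. fst u + 1 = n + 1} = {(n,{[]})}" 
  proof (intro set_eqI iffI)
    fix u assume "u \<in> {u \<in> cV n X. fst u + 1 = n + 1}"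
    then obtain S where "u = (n,S)" "(n,S) \<in> cV n X" by (cases u) auto
    then show "u \<in> {(n,{[]})}" using cV_n[OF len] by auto
  qed (use trm in auto)
  show ?thesis unfolding is_bdd_def canon_def bdd.simps
    using finV finA lay s1 s2 ar det by blast
qed

lemma canon_path_sub:
  assumes len: "\<forall>x\<in>X. length x = n"
  shows "(k,S) \<in> cV n X \<Longrightarrow> bdd_path (canon n X) (k,S) (n,{[]}) q \<Longrightarrow> map snd q \<in> S"
proof (induction q arbitrary: k S)
  case Nil
  then show ?case by simp
next
  case (Cons a q)
  then obtain b where a: "a = ((k,S),b)" "k < n" "res S [b] \<noteq> {}"
    and p: "bdd_path (canon n X) (k+1, res S [b]) (n,{[]}) q"
    by (cases a) (auto simp: canon_def)
  have "(k+1, res S [b]) \<in> cV n X"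
  proof -
    obtain p where "k = length p" "S = res X p" using Cons.prems cV_iff[OF len] by auto
    then show ?thesis using cV_iff[OF len, of "k+1" "res S [b]"] a
      by (auto intro!: exI[of _ "p @ [b]"])
  qed
  from Cons.IH[OF this p] have "map snd q \<in> res S [b]" .
  then show ?case using a by (simp add: res_def)
qed

lemma canon_path_sup:
  assumes len: "\<forall>x\<in>X. length x = n"
  shows "(k,S) \<in> cV n X \<Longrightarrow> t \<in> S \<Longrightarrow> \<exists>q. bdd_path (canon n X) (k,S) (n,{[]}) q \<and> map snd q = t"
proof (induction t arbitrary: k S)
  case Nil
  then have "k = n" using cV_len[OF len] by force
  then show ?case using cV_n[OF len] Nil by auto
next
  case (Cons b t)
  have kn: "k < n" using cV_len[OF len Cons.prems] by simp
  have ne: "t \<in> res S [b]" using Cons.prems by (simp add: res_def)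
  have v: "(k+1, res S [b]) \<in> cV n X"
  proof -
    obtain p where "k = length p" "S = res X p" using Cons.prems cV_iff[OF len] by auto
    then show ?thesis using cV_iff[OF len, of "k+1" "res S [b]"] ne
      by (auto intro!: exI[of _ "p @ [b]"])
  qed
  obtain q where q: "bdd_path (canon n X) (k+1, res S [b]) (n,{[]}) q" "map snd q = t"
    using Cons.IH[OF v ne] by auto
  show ?case
    apply (rule exI[of _ "((k,S),b) # q"])
    using q kn ne Cons.prems by (auto simp: canon_def)
qed

lemma canon_X:
  assumes len: "\<forall>x\<in>X. length x = n" and ne: "X \<noteq> {}"
  shows "bdd_X (canon n X) = X"
proof -
  have root: "(0,X) \<in> cV n X" using cV_iff[OF len, of 0 X] ne by (auto simp: res_def)
  show ?thesis unfolding bdd_X_def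
    using canon_path_sub[OF len root] canon_path_sup[OF len root]
    by (auto simp: canon_def)
qed



definition ren :: "('v,'a) bdd \<Rightarrow> ('v \<Rightarrow> nat) \<Rightarrow> ('a \<Rightarrow> nat) \<Rightarrow> (nat,nat) bdd" where
  "ren C fv fa = \<lparr> bdd_n = bdd_n C, bdd_N = fv ` bdd_N C, bdd_A = fa ` bdd_A C,
     bdd_layer = bdd_layer C \<circ> the_inv_into (bdd_N C) fv,
     bdd_src = fv \<circ> bdd_src C \<circ> the_inv_into (bdd_A C) fa,
     bdd_tgt = fv \<circ> bdd_tgt C \<circ> the_inv_into (bdd_A C) fa,
     bdd_label = bdd_label C \<circ> the_inv_into (bdd_A C) fa,
     bdd_root = fv (bdd_root C), bdd_term = fv (bdd_term C) \<rparr>"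

lemma path_arcs: "bdd_path B u v p \<Longrightarrow> set p \<subseteq> bdd_A B"
  by (induction p arbitrary: u) auto

lemma ren_path1:
  assumes "inj_on fa (bdd_A C)"
  shows "bdd_path C u v p \<Longrightarrow> bdd_path (ren C fv fa) (fv u) (fv v) (map fa p)"
  by (induction p arbitrary: u) (auto simp: ren_def the_inv_into_f_f[OF assms])

lemma ren_path2:
  assumes B: "is_bdd C" and iv: "inj_on fv (bdd_N C)" and ia: "inj_on fa (bdd_A C)"
  shows "bdd_path (ren C fv fa) u' v' p' \<Longrightarrow> u' \<in> fv ` bdd_N C \<Longrightarrow> v' \<in> fv ` bdd_N C \<Longrightarrow>
    bdd_path C (the_inv_into (bdd_N C) fv u') (the_inv_into (bdd_N C) fv v') (map (the_inv_into (bdd_A C) fa) p')"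
proof (induction p' arbitrary: u')
  case Nil
  then show ?case by (simp add: ren_def)
next
  case (Cons a' p')
  then obtain a where a: "a \<in> bdd_A C" "a' = fa a" "fv (bdd_src C a) = u'"
    and p: "bdd_path (ren C fv fa) (fv (bdd_tgt C a)) v' p'"
    by (auto simp: ren_def the_inv_into_f_f[OF ia])
  have t: "bdd_tgt C a \<in> bdd_N C" "bdd_src C a \<in> bdd_N C" using bdd_facts(10,11)[OF B a(1)] by auto
  have "bdd_path C (bdd_tgt C a) (the_inv_into (bdd_N C) fv v') (map (the_inv_into (bdd_A C) fa) p')"
    using Cons.IH[OF p _ Cons.prems(3)] t the_inv_into_f_f[OF iv] by auto
  moreover have "the_inv_into (bdd_N C) fv u' = bdd_src C a" using a(3) t the_inv_into_f_f[OF iv] by blast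
  ultimately show ?case using a t by (simp add: the_inv_into_f_f[OF iv] the_inv_into_f_f[OF ia])
qed

lemma ren_X:
  assumes B: "is_bdd C" and iv: "inj_on fv (bdd_N C)" and ia: "inj_on fa (bdd_A C)"
  shows "bdd_X (ren C fv fa) = bdd_X C"
proof (intro set_eqI iffI)
  fix s assume "s \<in> bdd_X (ren C fv fa)"
  then obtain p' where p': "bdd_path (ren C fv fa) (fv (bdd_root C)) (fv (bdd_term C)) p'"
    "s = map (bdd_label C \<circ> the_inv_into (bdd_A C) fa) p'"
    unfolding bdd_X_def by (auto simp: ren_def)
  have "bdd_path C (bdd_root C) (bdd_term C) (map (the_inv_into (bdd_A C) fa) p')"
    using ren_path2[OF B iv ia p'(1)] bdd_facts(3,5)[OF B] the_inv_into_f_f[OF iv] by auto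
  then show "s \<in> bdd_X C" unfolding bdd_X_def using p'(2)
    by (intro CollectI exI[of _ "map (the_inv_into (bdd_A C) fa) p'"]) simp
next
  fix s assume "s \<in> bdd_X C"
  then obtain p where p: "bdd_path C (bdd_root C) (bdd_term C) p" "s = map (bdd_label C) p"
    unfolding bdd_X_def by auto
  have "map (bdd_label C \<circ> the_inv_into (bdd_A C) fa) (map fa p) = map (bdd_label C) p"
    using path_arcs[OF p(1)] the_inv_into_f_f[OF ia] by (auto simp: subset_iff)
  then show "s \<in> bdd_X (ren C fv fa)" using ren_path1[where fv=fv, OF ia p(1)] p(2)
    unfolding bdd_X_def by (intro CollectI exI[of _ "map fa p"]) (simp add: ren_def)
qed

lemma ren_bdd:
  assumes B: "is_bdd C" and iv: "inj_on fv (bdd_N C)" and ia: "inj_on fa (bdd_A C)"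
  shows "is_bdd (ren C fv fa)"
proof -
  note F = bdd_facts[OF B]
  have Nf: "\<And>u. u \<in> bdd_N C \<Longrightarrow> the_inv_into (bdd_N C) fv (fv u) = u" using the_inv_into_f_f[OF iv] .
  have Af: "\<And>a. a \<in> bdd_A C \<Longrightarrow> the_inv_into (bdd_A C) fa (fa a) = a" using the_inv_into_f_f[OF ia] .
  have c1: "finite (fv ` bdd_N C)" "finite (fa ` bdd_A C)" using F(1,2) by simp_all
  have c2: "\<forall>u\<in>fv ` bdd_N C. bdd_layer C (the_inv_into (bdd_N C) fv u) \<in> {1..bdd_n C + 1}"
    using F(7) Nf by (simp add: ball_simps)
  have c3: "{u \<in> fv ` bdd_N C. bdd_layer C (the_inv_into (bdd_N C) fv u) = 1} = {fv (bdd_root C)}"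
  proof (intro set_eqI iffI)
    fix u assume "u \<in> {u \<in> fv ` bdd_N C. bdd_layer C (the_inv_into (bdd_N C) fv u) = 1}"
    then obtain x where "x \<in> bdd_N C" "u = fv x" "bdd_layer C x = 1" using Nf by auto
    then show "u \<in> {fv (bdd_root C)}" using F(8) by simp
  qed (use F(3,4) Nf in simp)
  have c4: "{u \<in> fv ` bdd_N C. bdd_layer C (the_inv_into (bdd_N C) fv u) = bdd_n C + 1} = {fv (bdd_term C)}"
  proof (intro set_eqI iffI)
    fix u assume "u \<in> {u \<in> fv ` bdd_N C. bdd_layer C (the_inv_into (bdd_N C) fv u) = bdd_n C + 1}"
    then obtain x where "x \<in> bdd_N C" "u = fv x" "bdd_layer C x = bdd_n C + 1" using Nf by auto
    then show "u \<in> {fv (bdd_term C)}" using F(9) by simp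
  qed (use F(5,6) Nf in simp)
  have c5: "\<forall>a\<in>fa ` bdd_A C. fv (bdd_src C (the_inv_into (bdd_A C) fa a)) \<in> fv ` bdd_N C \<and>
      fv (bdd_tgt C (the_inv_into (bdd_A C) fa a)) \<in> fv ` bdd_N C \<and>
      bdd_layer C (the_inv_into (bdd_N C) fv (fv (bdd_src C (the_inv_into (bdd_A C) fa a)))) \<in> {1..bdd_n C} \<and>
      bdd_layer C (the_inv_into (bdd_N C) fv (fv (bdd_tgt C (the_inv_into (bdd_A C) fa a)))) =
      bdd_layer C (the_inv_into (bdd_N C) fv (fv (bdd_src C (the_inv_into (bdd_A C) fa a)))) + 1"
    using F(10-13) Nf Af by (simp add: ball_simps)
  have c6: "\<forall>a\<in>fa ` bdd_A C. \<forall>b\<in>fa ` bdd_A C.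
      fv (bdd_src C (the_inv_into (bdd_A C) fa a)) = fv (bdd_src C (the_inv_into (bdd_A C) fa b)) \<and>
      bdd_label C (the_inv_into (bdd_A C) fa a) = bdd_label C (the_inv_into (bdd_A C) fa b) \<longrightarrow> a = b"
  proof (intro ballI impI)
    fix a b assume ab: "a \<in> fa ` bdd_A C" "b \<in> fa ` bdd_A C"
      "fv (bdd_src C (the_inv_into (bdd_A C) fa a)) = fv (bdd_src C (the_inv_into (bdd_A C) fa b)) \<and>
      bdd_label C (the_inv_into (bdd_A C) fa a) = bdd_label C (the_inv_into (bdd_A C) fa b)"
    then obtain a0 b0 where ab0: "a0 \<in> bdd_A C" "b0 \<in> bdd_A C" "a = fa a0" "b = fa b0" by auto
    with ab(3) have "fv (bdd_src C a0) = fv (bdd_src C b0)" "bdd_label C a0 = bdd_label C b0"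
      using Af by auto
    then have "bdd_src C a0 = bdd_src C b0" using iv F(10) ab0 by (meson inj_onD)
    then have "a0 = b0" using F(14) ab0 \<open>bdd_label C a0 = bdd_label C b0\<close> by blast
    then show "a = b" using ab0 by simp
  qed
  show ?thesis unfolding is_bdd_def ren_def bdd.simps comp_def
    using c1 c2 c3 c4 c5 c6 by (simp only: simp_thms)
qed

lemma rename_nat:
  assumes B: "is_bdd C"
  shows "\<exists>C'::(nat,nat) bdd. is_bdd C' \<and> bdd_n C' = bdd_n C \<and> bdd_X C' = bdd_X C \<and> card (bdd_N C') = card (bdd_N C)"
proof -
  obtain fv :: "'a \<Rightarrow> nat" where iv: "inj_on fv (bdd_N C)"
    using finite_imp_inj_to_nat_seg[OF bdd_facts(1)[OF B]] by blast
  obtain fa :: "'b \<Rightarrow> nat" where ia: "inj_on fa (bdd_A C)"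
    using finite_imp_inj_to_nat_seg[OF bdd_facts(2)[OF B]] by blast
  show ?thesis
    apply (rule exI[of _ "ren C fv fa"])
    using ren_bdd[OF B iv ia] ren_X[OF B iv ia] card_image[OF iv] by (simp add: ren_def)
qed



lemma X_finite:
  assumes "is_bdd B" shows "finite (bdd_X B)"
proof -
  have "bdd_X B \<subseteq> {xs. set xs \<subseteq> (UNIV::bool set) \<and> length xs = bdd_n B}"
    using X_length[OF assms] by auto
  then show ?thesis using finite_lists_length_eq[of "UNIV::bool set" "bdd_n B"] finite_subset by auto
qed

lemma reduced_props:
  assumes red: "is_reduced_bdd R" and ne: "bdd_X R \<noteq> {}"
  shows "\<forall>w\<in>bdd_N R. useful R w"
    "\<And>w1 w2. w1 \<in> bdd_N R \<Longrightarrow> w2 \<in> bdd_N R \<Longrightarrow> bdd_layer R w1 = bdd_layer R w2 \<Longrightarrow> suff R w1 = suff R w2 \<Longrightarrow> w1 = w2"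
proof -
  have B: "is_bdd R" using red unfolding is_reduced_bdd_def by simp
  define X where "X = bdd_X R"
  define n where "n = bdd_n R"
  have len: "\<forall>x\<in>X. length x = n" using X_length[OF B] unfolding X_def n_def by auto
  have fin: "finite X" using X_finite[OF B] unfolding X_def .
  have neX: "X \<noteq> {}" using ne unfolding X_def .
  obtain C' :: "(nat,nat) bdd" where C': "is_bdd C'" "bdd_n C' = n" "bdd_X C' = X" "card (bdd_N C') = card (cV n X)"
    using rename_nat[OF canon_bdd[OF len fin neX]] canon_X[OF len neX] by (auto simp: canon_def)
  have cardR: "card (bdd_N R) \<le> card (cV n X)"
    using red C' unfolding is_reduced_bdd_def X_def n_def by force
  define D where "D = {w\<in>bdd_N R. useful R w}"
  define g where "g w = (bdd_layer R w - 1, suff R w)" for w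
  have gD: "g ` D = cV n X"
  proof (intro set_eqI iffI)
    fix v assume "v \<in> g ` D"
    then obtain w p q where w: "w \<in> bdd_N R" "v = g w" "bdd_path R (bdd_root R) w p" "bdd_path R w (bdd_term R) q"
      unfolding D_def useful_def by auto
    have l: "bdd_layer R w = 1 + length p" using path_layer[OF B bdd_facts(3)[OF B] w(3)] bdd_facts(4)[OF B] by simp
    have s: "suff R w = res X (map (bdd_label R) p)" using suff_res[OF B w(3)] unfolding res_def X_def .
    have "map (bdd_label R) q \<in> suff R w" using w(4) unfolding suff_def by auto
    then show "v \<in> cV n X" using cV_iff[OF len] w(2) l s unfolding g_def
      by (metis empty_iff length_map diff_add_inverse)
  next
    fix v assume "v \<in> cV n X"
    then obtain k S where v: "v = (k,S)" "(k,S) \<in> cV n X" by (cases v) auto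
    then obtain p t where p: "k = length p" "S = res X p" "t \<in> S" using cV_iff[OF len] by blast
    then obtain P where P: "bdd_path R (bdd_root R) (bdd_term R) P" "p @ t = map (bdd_label R) P"
      unfolding res_def X_def bdd_X_def by auto
    define P1 P2 where "P1 = take (length p) P" and "P2 = drop (length p) P"
    have "P = P1 @ P2" unfolding P1_def P2_def by simp
    with P(1) obtain w where w: "bdd_path R (bdd_root R) w P1" "bdd_path R w (bdd_term R) P2"
      using path_append by metis
    have l1: "map (bdd_label R) P1 = p"
      using P(2) unfolding P1_def by (metis append_eq_conv_conj take_map)
    have lw: "w \<in> bdd_N R" "bdd_layer R w = 1 + length P1"
      using path_layer[OF B bdd_facts(3)[OF B] w(1)] bdd_facts(4)[OF B] by auto
    have s: "suff R w = S" using suff_res[OF B w(1)] p(2) l1 unfolding res_def X_def by simp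
    have "length P1 = k" using l1 p(1) by auto
    then have "g w = v" using v lw s unfolding g_def by simp
    moreover have "w \<in> D" using w lw unfolding D_def useful_def by auto
    ultimately show "v \<in> g ` D" by blast
  qed
  have finN: "finite (bdd_N R)" using bdd_facts(1)[OF B] .
  have DN: "D \<subseteq> bdd_N R" unfolding D_def by auto
  have finD: "finite D" using finN DN finite_subset by auto
  have c1: "card (g ` D) \<le> card D" using card_image_le[OF finD] .
  have c2: "card D \<le> card (bdd_N R)" using card_mono[OF finN DN] .
  have "card D = card (bdd_N R)" using c1 c2 cardR gD by simp
  then have DeqN: "D = bdd_N R" using card_subset_eq[OF finN DN] by simp
  have "card (g ` D) = card D" using c1 c2 cardR gD by simp
  then have inj: "inj_on g D" using inj_on_iff_eq_card[OF finD, of g] by simp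
  show "\<forall>w\<in>bdd_N R. useful R w" using DeqN unfolding D_def by auto
  fix w1 w2 assume "w1 \<in> bdd_N R" "w2 \<in> bdd_N R" "bdd_layer R w1 = bdd_layer R w2" "suff R w1 = suff R w2"
  then show "w1 = w2" using inj DeqN unfolding g_def inj_on_def by auto
qed



definition C0 :: "nat \<Rightarrow> (nat,nat) bdd" where
  "C0 n = \<lparr> bdd_n = n, bdd_N = {0,1}, bdd_A = {}, bdd_layer = (\<lambda>u. if u = 0 then 1 else n+1),
     bdd_src = id, bdd_tgt = id, bdd_label = (\<lambda>_. False), bdd_root = 0, bdd_term = 1 \<rparr>"

lemma C0_bdd: "n \<ge> 1 \<Longrightarrow> is_bdd (C0 n)"
  unfolding is_bdd_def C0_def by auto

lemma C0_X: "bdd_X (C0 n) = {}"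
proof -
  have "\<And>p. \<not> bdd_path (C0 n) 0 1 p" by (case_tac p) (auto simp: C0_def)
  then show ?thesis unfolding bdd_X_def by (auto simp: C0_def)
qed

lemma empty_case:
  assumes red: "is_reduced_bdd R" and e: "bdd_X R = {}"
  shows "Fcap R = {}"
proof -
  have B: "is_bdd R" using red unfolding is_reduced_bdd_def by simp
  note F = bdd_facts[OF B]
  have rt: "bdd_root R \<noteq> bdd_term R"
  proof
    assume "bdd_root R = bdd_term R"
    then have "[] \<in> bdd_X R" unfolding bdd_X_def by force
    with e show False by simp
  qed
  have n1: "bdd_n R \<ge> 1"
  proof (rule ccontr)
    assume "\<not> bdd_n R \<ge> 1"
    then have "bdd_layer R (bdd_term R) = 1" using F(6) by simp
    then have "bdd_term R = bdd_root R" using F(8)[OF F(5)] by simp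
    with rt show False by simp
  qed
  have "card (bdd_N R) \<le> card (bdd_N (C0 (bdd_n R)))"
    using red C0_bdd[OF n1] C0_X e unfolding is_reduced_bdd_def by (auto simp: C0_def)
  then have c: "card (bdd_N R) \<le> 2" by (simp add: C0_def)
  have sub: "{bdd_root R, bdd_term R} \<subseteq> bdd_N R" using F(3,5) by auto
  have "card {bdd_root R, bdd_term R} = 2" using rt by simp
  then have NN: "bdd_N R = {bdd_root R, bdd_term R}"
    using card_subset_eq[OF F(1) sub] c card_mono[OF F(1) sub] by simp
  show ?thesis
  proof (rule ccontr)
    assume "Fcap R \<noteq> {}"
    then obtain x y where "(x,y) \<in> Fcap R" by auto
    then have "(\<Sum>a\<in>out_arcs R (bdd_root R). y a) = 1" unfolding Fcap_def by auto
    then have "out_arcs R (bdd_root R) \<noteq> {}" by auto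
    then obtain a where a: "a \<in> bdd_A R" "bdd_src R a = bdd_root R"
      unfolding out_arcs_def by auto
    have "bdd_tgt R a \<in> bdd_N R" "bdd_layer R (bdd_tgt R a) = 2"
      using F(11,13)[OF a(1)] a(2) F(4) by auto
    then have "bdd_tgt R a = bdd_term R" using NN F(4) by auto
    then have "[bdd_label R a] \<in> bdd_X R" unfolding bdd_X_def using a
      by (intro CollectI exI[of _ "[a]"]) simp
    with e show False by simp
  qed
qed



locale lift =
  fixes B :: "('v,'a) bdd" and R :: "('w,'b) bdd" and x :: "nat \<Rightarrow> real" and yr :: "'b \<Rightarrow> real"
  assumes BB: "is_bdd B" and RB: "is_bdd R" and nn: "bdd_n R = bdd_n B"
    and XX: "bdd_X R = bdd_X B" and ne: "bdd_X B \<noteq> {}"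
    and allU: "\<forall>w\<in>bdd_N R. useful R w"
    and injR: "\<And>w1 w2. w1 \<in> bdd_N R \<Longrightarrow> w2 \<in> bdd_N R \<Longrightarrow> bdd_layer R w1 = bdd_layer R w2 \<Longrightarrow> suff R w1 = suff R w2 \<Longrightarrow> w1 = w2"
    and F: "(x, yr) \<in> Fcap R"
begin

definition h :: "'v \<Rightarrow> 'w" where
  "h u = (SOME w. \<exists>p q. bdd_path B (bdd_root B) u p \<and> bdd_path R (bdd_root R) w q \<and> map (bdd_label B) p = map (bdd_label R) q)"

lemma useful_N: "useful B u \<Longrightarrow> u \<in> bdd_N B"
  unfolding useful_def using path_layer[OF BB bdd_facts(3)[OF BB]] by blast

lemma R_reach:
  assumes p: "bdd_path B (bdd_root B) u p" and s: "suff B u \<noteq> {}"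
  shows "\<exists>w q. bdd_path R (bdd_root R) w q \<and> map (bdd_label R) q = map (bdd_label B) p \<and> w \<in> bdd_N R
     \<and> suff R w = suff B u \<and> bdd_layer R w = bdd_layer B u"
proof -
  obtain t where "t \<in> suff B u" using s by auto
  then have "map (bdd_label B) p @ t \<in> bdd_X R" using suff_res[OF BB p] XX by auto
  then obtain P where P: "bdd_path R (bdd_root R) (bdd_term R) P" "map (bdd_label B) p @ t = map (bdd_label R) P"
    unfolding bdd_X_def by auto
  define P1 P2 where "P1 = take (length p) P" and "P2 = drop (length p) P"
  have "P = P1 @ P2" unfolding P1_def P2_def by simp
  with P(1) obtain w where w: "bdd_path R (bdd_root R) w P1"
    using path_append by metis
  have l1: "map (bdd_label R) P1 = map (bdd_label B) p"
    using P(2) unfolding P1_def by (metis append_eq_conv_conj take_map length_map)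
  have lw: "w \<in> bdd_N R" "bdd_layer R w = 1 + length P1"
    using path_layer[OF RB bdd_facts(3)[OF RB] w] bdd_facts(4)[OF RB] by auto
  have lu: "bdd_layer B u = 1 + length p"
    using path_layer[OF BB bdd_facts(3)[OF BB] p] bdd_facts(4)[OF BB] by auto
  have "length P1 = length p" using l1 by (metis length_map)
  moreover have "suff R w = suff B u" using suff_res[OF RB w] suff_res[OF BB p] l1 XX by simp
  ultimately show ?thesis using w l1 lw lu by auto
qed

lemma useful_suff: "useful B u \<Longrightarrow> suff B u \<noteq> {}"
  unfolding useful_def suff_def by auto

lemma h_props:
  assumes u: "useful B u" and p: "bdd_path B (bdd_root B) u p"
  shows "\<exists>q. bdd_path R (bdd_root R) (h u) q \<and> map (bdd_label R) q = map (bdd_label B) p"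
    "h u \<in> bdd_N R" "suff R (h u) = suff B u" "bdd_layer R (h u) = bdd_layer B u"
proof -
  obtain w q where wq: "bdd_path R (bdd_root R) w q" "map (bdd_label R) q = map (bdd_label B) p" "w \<in> bdd_N R"
     "suff R w = suff B u" "bdd_layer R w = bdd_layer B u"
    using R_reach[OF p useful_suff[OF u]] by blast
  have "\<exists>w p q. bdd_path B (bdd_root B) u p \<and> bdd_path R (bdd_root R) w q \<and> map (bdd_label B) p = map (bdd_label R) q"
    using wq p by metis
  then obtain p1 q1 where pq1: "bdd_path B (bdd_root B) u p1" "bdd_path R (bdd_root R) (h u) q1"
    "map (bdd_label B) p1 = map (bdd_label R) q1"
    unfolding h_def by (rule someI_ex[where P = "\<lambda>w. \<exists>p q. bdd_path B (bdd_root B) u p \<and> bdd_path R (bdd_root R) w q \<and> map (bdd_label B) p = map (bdd_label R) q", THEN exE]) blast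
  obtain w1 q1' where w1: "bdd_path R (bdd_root R) w1 q1'" "map (bdd_label R) q1' = map (bdd_label B) p1" "w1 \<in> bdd_N R"
     "suff R w1 = suff B u" "bdd_layer R w1 = bdd_layer B u"
    using R_reach[OF pq1(1) useful_suff[OF u]] by blast
  have "w1 = h u" using path_det[OF RB w1(1) pq1(2)] w1(2) pq1(3) by simp
  with w1 have hw: "h u \<in> bdd_N R" "suff R (h u) = suff B u" "bdd_layer R (h u) = bdd_layer B u" by auto
  have "w = h u" using injR[OF wq(3) hw(1)] wq(4,5) hw(2,3) by simp
  with wq hw show "\<exists>q. bdd_path R (bdd_root R) (h u) q \<and> map (bdd_label R) q = map (bdd_label B) p"
    "h u \<in> bdd_N R" "suff R (h u) = suff B u" "bdd_layer R (h u) = bdd_layer B u" by auto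
qed

lemma h_uniq:
  assumes u: "useful B u" and p: "bdd_path B (bdd_root B) u p"
    and q: "bdd_path R (bdd_root R) w q" "map (bdd_label R) q = map (bdd_label B) p"
  shows "w = h u"
proof -
  obtain q' where "bdd_path R (bdd_root R) (h u) q'" "map (bdd_label R) q' = map (bdd_label B) p"
    using h_props(1)[OF u p] by blast
  then show ?thesis using path_det[OF RB q(1)] q(2) by metis
qed

definition UA :: "'a set" where
  "UA = {a\<in>bdd_A B. useful B (bdd_src B a) \<and> useful B (bdd_tgt B a)}"

definition hA :: "'a \<Rightarrow> 'b" where
  "hA a = (THE a'. a' \<in> bdd_A R \<and> bdd_src R a' = h (bdd_src B a) \<and> bdd_label R a' = bdd_label B a)"

lemma hA_eq:
  assumes "a' \<in> bdd_A R" "bdd_src R a' = h (bdd_src B a)" "bdd_label R a' = bdd_label B a"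
  shows "hA a = a'"
  unfolding hA_def
proof (rule the_equality)
  show "a' \<in> bdd_A R \<and> bdd_src R a' = h (bdd_src B a) \<and> bdd_label R a' = bdd_label B a" using assms by simp
next
  fix b assume "b \<in> bdd_A R \<and> bdd_src R b = h (bdd_src B a) \<and> bdd_label R b = bdd_label B a"
  then show "b = a'" using bdd_facts(14)[OF RB, of b a'] assms by auto
qed

lemma hA_props:
  assumes a: "a \<in> UA"
  shows "hA a \<in> bdd_A R" "bdd_src R (hA a) = h (bdd_src B a)" "bdd_label R (hA a) = bdd_label B a"
    "bdd_tgt R (hA a) = h (bdd_tgt B a)"
proof -
  have aA: "a \<in> bdd_A B" and us: "useful B (bdd_src B a)" and ut: "useful B (bdd_tgt B a)"
    using a unfolding UA_def by auto
  obtain p where p: "bdd_path B (bdd_root B) (bdd_src B a) p" using us unfolding useful_def by auto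
  have pa: "bdd_path B (bdd_root B) (bdd_tgt B a) (p @ [a])" using p aA by (simp add: path_append)
  obtain q' where q': "bdd_path R (bdd_root R) (h (bdd_tgt B a)) q'" "map (bdd_label R) q' = map (bdd_label B) (p @ [a])"
    using h_props(1)[OF ut pa] by blast
  have "q' \<noteq> []" using q'(2) by auto
  then obtain q'' a'' where qq: "q' = q'' @ [a'']" by (metis rev_exhaust)
  with q'(1) obtain w'' where w'': "bdd_path R (bdd_root R) w'' q''" "bdd_path R w'' (h (bdd_tgt B a)) [a'']"
    using path_append by metis
  have l: "map (bdd_label R) q'' = map (bdd_label B) p" "bdd_label R a'' = bdd_label B a" using q'(2) qq by auto
  have "w'' = h (bdd_src B a)" using h_uniq[OF us p w''(1) l(1)] .
  then have a'': "a'' \<in> bdd_A R" "bdd_src R a'' = h (bdd_src B a)" "bdd_tgt R a'' = h (bdd_tgt B a)"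
    using w''(2) by auto
  have "hA a = a''" using hA_eq[OF a''(1,2) l(2)] .
  then show "hA a \<in> bdd_A R" "bdd_src R (hA a) = h (bdd_src B a)" "bdd_label R (hA a) = bdd_label B a"
    "bdd_tgt R (hA a) = h (bdd_tgt B a)" using a'' l by auto
qed

lemma hA_surj:
  assumes u: "useful B u" and a': "a' \<in> bdd_A R" "bdd_src R a' = h u"
  shows "\<exists>a\<in>UA. bdd_src B a = u \<and> hA a = a'"
proof -
  have "bdd_tgt R a' \<in> bdd_N R" using bdd_facts(11)[OF RB a'(1)] .
  then obtain s where s: "bdd_path R (bdd_tgt R a') (bdd_term R) s" using allU unfolding useful_def by auto
  obtain p where p: "bdd_path B (bdd_root B) u p" using u unfolding useful_def by auto
  have "map (bdd_label R) (a' # s) \<in> suff R (h u)" using s a' unfolding suff_def by (intro CollectI exI[of _ "a' # s"]) simp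
  then have "map (bdd_label R) (a' # s) \<in> suff B u" using h_props(3)[OF u p] by simp
  then obtain P where P: "bdd_path B u (bdd_term B) P" "map (bdd_label R) (a' # s) = map (bdd_label B) P"
    unfolding suff_def by blast
  then obtain a P' where aP: "P = a # P'" by (cases P) auto
  with P have a: "a \<in> bdd_A B" "bdd_src B a = u" "bdd_path B (bdd_tgt B a) (bdd_term B) P'"
    "bdd_label B a = bdd_label R a'" by auto
  have "bdd_path B (bdd_root B) (bdd_tgt B a) (p @ [a])" using p a by (simp add: path_append)
  then have "useful B (bdd_tgt B a)" using a(3) unfolding useful_def by blast
  then have aU: "a \<in> UA" unfolding UA_def using a u by simp
  have "hA a = a'" using hA_eq[OF a'(1)] a'(2) a by simp
  with aU a show ?thesis by blast
qed

lemma B_det: "a1 \<in> bdd_A B \<Longrightarrow> a2 \<in> bdd_A B \<Longrightarrow> bdd_src B a1 = bdd_src B a2 \<Longrightarrow> bdd_label B a1 = bdd_label B a2 \<Longrightarrow> a1 = a2"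
  using bdd_facts(14)[OF BB] by blast

lemma Fr: "\<forall>i\<in>{1..bdd_n R}. 0 \<le> x i \<and> x i \<le> 1"
     "\<forall>a\<in>bdd_A R. 0 \<le> yr a"
     "\<forall>u\<in>bdd_N R - {bdd_root R, bdd_term R}. (\<Sum>a\<in>out_arcs R u. yr a) = (\<Sum>a\<in>in_arcs R u. yr a)"
     "(\<Sum>a\<in>out_arcs R (bdd_root R). yr a) = 1"
     "(\<Sum>a\<in>in_arcs R (bdd_term R). yr a) = 1"
     "\<forall>a\<in>bdd_A R. bdd_label R a \<longrightarrow> yr a \<le> x (bdd_layer R (bdd_src R a))"
     "\<forall>a\<in>bdd_A R. \<not> bdd_label R a \<longrightarrow> yr a \<le> 1 - x (bdd_layer R (bdd_src R a))"
  using F unfolding Fcap_def by auto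

definition outR :: "'w \<Rightarrow> real" where "outR w = (\<Sum>a\<in>out_arcs R w. yr a)"
definition rr :: "'b \<Rightarrow> real" where "rr a = yr a / outR (bdd_src R a)"
definition psi :: "'w \<Rightarrow> real" where
  "psi w = (if w = bdd_root R then 1 else (\<Sum>a\<in>in_arcs R w. yr a))"

primrec beta :: "nat \<Rightarrow> 'v \<Rightarrow> real" where
  "beta 0 u = (if u = bdd_root B then 1 else 0)"
| "beta (Suc k) u = (\<Sum>a\<in>{a\<in>in_arcs B u. a \<in> UA}. beta k (bdd_src B a) * rr (hA a))"

definition bv :: "'v \<Rightarrow> real" where "bv u = beta (bdd_layer B u - 1) u"
definition yB :: "'a \<Rightarrow> real" where "yB a = (if a \<in> UA then bv (bdd_src B a) * rr (hA a) else 0)"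
definition Pre :: "'w \<Rightarrow> 'v set" where "Pre w = {u\<in>bdd_N B. useful B u \<and> h u = w}"

lemma fin_out_R: "finite (out_arcs R w)" unfolding out_arcs_def using bdd_facts(2)[OF RB] by simp
lemma fin_in_R: "finite (in_arcs R w)" unfolding in_arcs_def using bdd_facts(2)[OF RB] by simp
lemma fin_out_B: "finite (out_arcs B w)" unfolding out_arcs_def using bdd_facts(2)[OF BB] by simp
lemma fin_in_B: "finite (in_arcs B w)" unfolding in_arcs_def using bdd_facts(2)[OF BB] by simp
lemma fin_UA: "finite UA" unfolding UA_def using bdd_facts(2)[OF BB] by simp
lemma fin_Pre: "finite (Pre w)" unfolding Pre_def using bdd_facts(1)[OF BB] by simp

lemma outR_nn: "outR w \<ge> 0"
  unfolding outR_def out_arcs_def using Fr(2) by (auto intro: sum_nonneg)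

lemma rr_nn: "a \<in> bdd_A R \<Longrightarrow> rr a \<ge> 0"
  unfolding rr_def using Fr(2) outR_nn by auto

lemma beta_nn: "beta k u \<ge> 0"
proof (induction k arbitrary: u)
  case 0 then show ?case by simp
next
  case (Suc k)
  show ?case unfolding beta.simps
    by (rule sum_nonneg) (use Suc rr_nn hA_props(1) in auto)
qed

lemma bv_nn: "bv u \<ge> 0" unfolding bv_def using beta_nn .

lemma yB_nn: "yB a \<ge> 0"
  unfolding yB_def using bv_nn rr_nn hA_props(1) by auto

lemma out_psi: "w \<in> bdd_N R \<Longrightarrow> w \<noteq> bdd_term R \<Longrightarrow> outR w = psi w"
  unfolding outR_def psi_def using Fr(3,4) by auto

lemma rr_out: assumes "a \<in> bdd_A R" shows "rr a * outR (bdd_src R a) = yr a"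
proof (cases "outR (bdd_src R a) = 0")
  case True
  have "a \<in> out_arcs R (bdd_src R a)" using assms unfolding out_arcs_def by simp
  moreover have "\<forall>b\<in>out_arcs R (bdd_src R a). yr b \<ge> 0" using Fr(2) unfolding out_arcs_def by auto
  ultimately have "yr a = 0" using True sum_nonneg_eq_0_iff[OF fin_out_R] unfolding outR_def by blast
  then show ?thesis using True by simp
next
  case False then show ?thesis unfolding rr_def by simp
qed

lemma sum_rr: "(\<Sum>a\<in>out_arcs R w. rr a) = (if outR w = 0 then 0 else 1)"
proof -
  have "(\<Sum>a\<in>out_arcs R w. rr a) = (\<Sum>a\<in>out_arcs R w. yr a / outR w)"
    unfolding rr_def out_arcs_def by simp
  also have "\<dots> = outR w / outR w" unfolding outR_def by (simp only: sum_divide_distrib)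
  finally show ?thesis by simp
qed

lemma in_sum_B:
  assumes u: "u \<in> bdd_N B" "u \<noteq> bdd_root B"
  shows "(\<Sum>a\<in>in_arcs B u. yB a) = bv u"
proof -
  have l: "bdd_layer B u \<ge> 2" using bdd_facts(7,8)[OF BB u(1)] u(2) by fastforce
  have "(\<Sum>a\<in>in_arcs B u. yB a) = (\<Sum>a\<in>{a\<in>in_arcs B u. a \<in> UA}. bv (bdd_src B a) * rr (hA a))"
    unfolding yB_def using sum.inter_filter[OF fin_in_B, symmetric] by (simp add: sum.inter_filter[OF fin_in_B])
  also have "\<dots> = (\<Sum>a\<in>{a\<in>in_arcs B u. a \<in> UA}. beta (bdd_layer B u - 2) (bdd_src B a) * rr (hA a))"
  proof (rule sum.cong[OF refl])
    fix a assume "a \<in> {a\<in>in_arcs B u. a \<in> UA}"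
    then have "a \<in> bdd_A B" "bdd_tgt B a = u" unfolding in_arcs_def by auto
    then have "bdd_layer B (bdd_src B a) - 1 = bdd_layer B u - 2" using bdd_facts(13)[OF BB] by force
    then show "bv (bdd_src B a) * rr (hA a) = beta (bdd_layer B u - 2) (bdd_src B a) * rr (hA a)"
      unfolding bv_def by simp
  qed
  also have "\<dots> = beta (Suc (bdd_layer B u - 2)) u" by simp
  also have "\<dots> = bv u" unfolding bv_def using l by (simp add: Suc_diff_Suc numeral_2_eq_2)
  finally show ?thesis .
qed

lemma root_useful: "useful B (bdd_root B)"
proof -
  obtain s where "s \<in> bdd_X B" using ne by auto
  then obtain p where "bdd_path B (bdd_root B) (bdd_term B) p" unfolding bdd_X_def by auto
  then show ?thesis unfolding useful_def by (metis bdd_path.simps(1))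
qed

lemma term_useful: "useful B (bdd_term B)"
proof -
  obtain s where "s \<in> bdd_X B" using ne by auto
  then obtain p where "bdd_path B (bdd_root B) (bdd_term B) p" unfolding bdd_X_def by auto
  then show ?thesis unfolding useful_def by (metis bdd_path.simps(1))
qed

lemma h_root: "h (bdd_root B) = bdd_root R"
  using h_uniq[OF root_useful, of "[]" "bdd_root R" "[]"] by simp

lemma useful_h: "useful B u \<Longrightarrow> h u \<in> bdd_N R \<and> bdd_layer R (h u) = bdd_layer B u"
  using h_props(2,4) unfolding useful_def by metis

lemma h_term: "h (bdd_term B) = bdd_term R"
  using useful_h[OF term_useful] bdd_facts(6,9)[OF RB] bdd_facts(6)[OF BB] nn by auto

lemma Pre_layer: "u \<in> Pre w \<Longrightarrow> bdd_layer B u = bdd_layer R w"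
  unfolding Pre_def using useful_h by auto

lemma src_bij:
  assumes a': "a' \<in> bdd_A R"
  shows "bij_betw (bdd_src B) {a\<in>UA. hA a = a'} (Pre (bdd_src R a'))"
proof (rule bij_betw_imageI)
  show "inj_on (bdd_src B) {a\<in>UA. hA a = a'}"
  proof (rule inj_onI)
    fix a1 a2 assume "a1 \<in> {a\<in>UA. hA a = a'}" "a2 \<in> {a\<in>UA. hA a = a'}" "bdd_src B a1 = bdd_src B a2"
    then show "a1 = a2" using B_det hA_props(3) unfolding UA_def by (metis (mono_tags, lifting) mem_Collect_eq)
  qed
  show "bdd_src B ` {a\<in>UA. hA a = a'} = Pre (bdd_src R a')"
  proof (intro set_eqI iffI)
    fix u assume "u \<in> bdd_src B ` {a\<in>UA. hA a = a'}"
    then obtain a where a: "a \<in> UA" "hA a = a'" "u = bdd_src B a" by auto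
    then show "u \<in> Pre (bdd_src R a')" unfolding Pre_def using hA_props(2)[OF a(1)] useful_N
      unfolding UA_def by auto
  next
    fix u assume "u \<in> Pre (bdd_src R a')"
    then have "useful B u" "bdd_src R a' = h u" unfolding Pre_def by auto
    then show "u \<in> bdd_src B ` {a\<in>UA. hA a = a'}" using hA_surj[OF _ a'] by force
  qed
qed

lemma INV_k: "\<forall>w\<in>bdd_N R. bdd_layer R w = k + 1 \<longrightarrow> (\<Sum>u\<in>Pre w. bv u) = psi w"
proof (induction k)
  case 0
  show ?case
  proof (intro ballI impI)
    fix w assume w: "w \<in> bdd_N R" "bdd_layer R w = 0 + 1"
    then have wr: "w = bdd_root R" using bdd_facts(8)[OF RB] by simp
    have "Pre w = {bdd_root B}"
    proof (intro set_eqI iffI)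
      fix u assume "u \<in> Pre w"
      then show "u \<in> {bdd_root B}" using Pre_layer[of u w] w bdd_facts(8)[OF BB] unfolding Pre_def by auto
    next
      fix u assume "u \<in> {bdd_root B}"
      then show "u \<in> Pre w" unfolding Pre_def using root_useful h_root wr bdd_facts(3)[OF BB] by auto
    qed
    then show "(\<Sum>u\<in>Pre w. bv u) = psi w" using wr bdd_facts(4)[OF BB] unfolding bv_def psi_def by simp
  qed
next
  case (Suc k)
  show ?case
  proof (intro ballI impI)
    fix w assume w: "w \<in> bdd_N R" "bdd_layer R w = Suc k + 1"
    have wr: "w \<noteq> bdd_root R" using w bdd_facts(4)[OF RB] by auto
    define S1 where "S1 = {a\<in>UA. h (bdd_tgt B a) = w}"
    have finS1: "finite S1" unfolding S1_def using fin_UA by simp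
    have step1: "bv u = (\<Sum>a\<in>{a\<in>S1. bdd_tgt B a = u}. yB a)" if u: "u \<in> Pre w" for u
    proof -
      have uN: "u \<in> bdd_N B" "u \<noteq> bdd_root B" "h u = w"
        using u Pre_layer[OF u] w bdd_facts(4)[OF BB] unfolding Pre_def by auto
      have "bv u = (\<Sum>a\<in>in_arcs B u. yB a)" using in_sum_B[OF uN(1,2)] by simp
      also have "\<dots> = (\<Sum>a\<in>{a\<in>S1. bdd_tgt B a = u}. yB a)"
      proof (rule sum.mono_neutral_right[OF fin_in_B])
        show "{a\<in>S1. bdd_tgt B a = u} \<subseteq> in_arcs B u" unfolding S1_def UA_def in_arcs_def by auto
        show "\<forall>a\<in>in_arcs B u - {a\<in>S1. bdd_tgt B a = u}. yB a = 0"
          unfolding S1_def in_arcs_def yB_def using uN(3) by auto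
      qed
      finally show ?thesis .
    qed
    have "(\<Sum>u\<in>Pre w. bv u) = (\<Sum>u\<in>Pre w. \<Sum>a\<in>{a\<in>S1. bdd_tgt B a = u}. yB a)"
      using step1 by simp
    also have "\<dots> = (\<Sum>a\<in>S1. yB a)"
    proof (rule sum.group[OF finS1])
      show "bdd_tgt B ` S1 \<subseteq> Pre w" unfolding S1_def Pre_def UA_def using useful_N by auto
    qed (rule fin_Pre)
    also have "\<dots> = (\<Sum>a'\<in>in_arcs R w. \<Sum>a\<in>{a\<in>S1. hA a = a'}. yB a)"
    proof (rule sum.group[OF finS1, symmetric])
      show "hA ` S1 \<subseteq> in_arcs R w" unfolding S1_def in_arcs_def using hA_props(1,4) by auto
    qed (rule fin_in_R)
    also have "\<dots> = (\<Sum>a'\<in>in_arcs R w. yr a')"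
    proof (rule sum.cong[OF refl])
      fix a' assume a': "a' \<in> in_arcs R w"
      then have a'A: "a' \<in> bdd_A R" "bdd_tgt R a' = w" unfolding in_arcs_def by auto
      have ls: "bdd_layer R (bdd_src R a') = k + 1" using bdd_facts(13)[OF RB a'A(1)] a'A(2) w(2) by simp
      have sN: "bdd_src R a' \<in> bdd_N R" "bdd_src R a' \<noteq> bdd_term R"
        using bdd_facts(10,12)[OF RB a'A(1)] bdd_facts(6)[OF RB] by auto
      have eqs: "{a\<in>S1. hA a = a'} = {a\<in>UA. hA a = a'}"
        unfolding S1_def using hA_props(4) a'A(2) by auto
      have "(\<Sum>a\<in>{a\<in>S1. hA a = a'}. yB a) = (\<Sum>a\<in>{a\<in>UA. hA a = a'}. bv (bdd_src B a) * rr a')"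
        unfolding eqs yB_def by (rule sum.cong) auto
      also have "\<dots> = rr a' * (\<Sum>a\<in>{a\<in>UA. hA a = a'}. bv (bdd_src B a))"
        by (simp add: sum_distrib_left mult.commute)
      also have "(\<Sum>a\<in>{a\<in>UA. hA a = a'}. bv (bdd_src B a)) = (\<Sum>u\<in>Pre (bdd_src R a'). bv u)"
        using sum.reindex_bij_betw[OF src_bij[OF a'A(1)], of bv] .
      also have "\<dots> = psi (bdd_src R a')" using Suc.IH sN(1) ls by blast
      also have "\<dots> = outR (bdd_src R a')" using out_psi[OF sN] by simp
      finally show "(\<Sum>a\<in>{a\<in>S1. hA a = a'}. yB a) = yr a'" using rr_out[OF a'A(1)] by simp
    qed
    also have "\<dots> = psi w" unfolding psi_def using wr by simp
    finally show "(\<Sum>u\<in>Pre w. bv u) = psi w" .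
  qed
qed

lemma INV: "w \<in> bdd_N R \<Longrightarrow> (\<Sum>u\<in>Pre w. bv u) = psi w"
  using INV_k[of "bdd_layer R w - 1"] bdd_facts(7)[OF RB] by fastforce

lemma bv_le: assumes "useful B u" shows "bv u \<le> psi (h u)"
proof -
  have "u \<in> Pre (h u)" unfolding Pre_def using assms useful_N by auto
  then have "bv u \<le> (\<Sum>u\<in>Pre (h u). bv u)" using member_le_sum[OF _ _ fin_Pre] bv_nn by blast
  then show ?thesis using INV useful_h[OF assms] by simp
qed

lemma hA_bij:
  assumes u: "useful B u"
  shows "bij_betw hA {a\<in>out_arcs B u. a \<in> UA} (out_arcs R (h u))"
proof (rule bij_betw_imageI)
  show "inj_on hA {a\<in>out_arcs B u. a \<in> UA}"
  proof (rule inj_onI)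
    fix a1 a2 assume a: "a1 \<in> {a\<in>out_arcs B u. a \<in> UA}" "a2 \<in> {a\<in>out_arcs B u. a \<in> UA}" "hA a1 = hA a2"
    then have "bdd_label B a1 = bdd_label B a2" using hA_props(3) by (metis (mono_tags, lifting) mem_Collect_eq)
    then show "a1 = a2" using a B_det unfolding out_arcs_def by auto
  qed
  show "hA ` {a\<in>out_arcs B u. a \<in> UA} = out_arcs R (h u)"
  proof (intro set_eqI iffI)
    fix a' assume "a' \<in> hA ` {a\<in>out_arcs B u. a \<in> UA}"
    then obtain a where a: "a \<in> UA" "bdd_src B a = u" "a' = hA a" unfolding out_arcs_def by auto
    then show "a' \<in> out_arcs R (h u)" using hA_props(1,2)[OF a(1)] unfolding out_arcs_def by auto
  next
    fix a' assume "a' \<in> out_arcs R (h u)"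
    then have "a' \<in> bdd_A R" "bdd_src R a' = h u" unfolding out_arcs_def by auto
    then obtain a where "a \<in> UA" "bdd_src B a = u" "hA a = a'" using hA_surj[OF u] by blast
    then show "a' \<in> hA ` {a\<in>out_arcs B u. a \<in> UA}" unfolding out_arcs_def UA_def by force
  qed
qed

lemma bv_zero: "\<not> useful B u \<Longrightarrow> u \<in> bdd_N B \<Longrightarrow> bv u = 0"
proof -
  assume nu: "\<not> useful B u" and uN: "u \<in> bdd_N B"
  then have "u \<noteq> bdd_root B" using root_useful by auto
  then have "bv u = (\<Sum>a\<in>in_arcs B u. yB a)" using in_sum_B[OF uN] by simp
  also have "\<dots> = 0" unfolding yB_def UA_def in_arcs_def using nu by (auto intro: sum.neutral)
  finally show ?thesis .
qed

lemma out_sum_B: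
  assumes u: "u \<in> bdd_N B" "u \<noteq> bdd_term B"
  shows "(\<Sum>a\<in>out_arcs B u. yB a) = bv u"
proof (cases "useful B u")
  case False
  have "(\<Sum>a\<in>out_arcs B u. yB a) = 0" unfolding yB_def UA_def out_arcs_def using False by (auto intro: sum.neutral)
  then show ?thesis using bv_zero[OF False u(1)] by simp
next
  case True
  have hu: "h u \<in> bdd_N R" "h u \<noteq> bdd_term R"
    using useful_h[OF True] u bdd_facts(6,9)[OF BB] bdd_facts(6)[OF RB] nn by auto
  have "(\<Sum>a\<in>out_arcs B u. yB a) = (\<Sum>a\<in>{a\<in>out_arcs B u. a \<in> UA}. bv u * rr (hA a))"
    unfolding yB_def by (simp add: sum.inter_filter[OF fin_out_B, symmetric]) (rule sum.cong, auto simp: out_arcs_def)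
  also have "\<dots> = bv u * (\<Sum>a\<in>{a\<in>out_arcs B u. a \<in> UA}. rr (hA a))" by (simp add: sum_distrib_left)
  also have "(\<Sum>a\<in>{a\<in>out_arcs B u. a \<in> UA}. rr (hA a)) = (\<Sum>a'\<in>out_arcs R (h u). rr a')"
    using sum.reindex_bij_betw[OF hA_bij[OF True], of rr] .
  also have "\<dots> = (if outR (h u) = 0 then 0 else 1)" by (rule sum_rr)
  finally have eq: "(\<Sum>a\<in>out_arcs B u. yB a) = bv u * (if outR (h u) = 0 then 0 else 1)" .
  have "bv u \<le> outR (h u)" using bv_le[OF True] out_psi[OF hu] by simp
  then have "outR (h u) = 0 \<Longrightarrow> bv u = 0" using bv_nn[of u] by simp
  then show ?thesis using eq by auto
qed

lemma yB_le: assumes a: "a \<in> UA" shows "yB a \<le> yr (hA a)"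
proof -
  define u where "u = bdd_src B a"
  define a' where "a' = hA a"
  have us: "useful B u" using a unfolding UA_def u_def by simp
  have a'A: "a' \<in> bdd_A R" "bdd_src R a' = h u" using hA_props[OF a] unfolding a'_def u_def by auto
  have hu: "h u \<in> bdd_N R" "h u \<noteq> bdd_term R"
    using bdd_facts(10,12)[OF RB a'A(1)] a'A(2) bdd_facts(6)[OF RB] by auto
  have le: "bv u \<le> outR (h u)" using bv_le[OF us] out_psi[OF hu] by simp
  have yr0: "yr a' \<ge> 0" using Fr(2) a'A(1) by auto
  have yB: "yB a = bv u * (yr a' / outR (h u))" unfolding yB_def rr_def using a a'A(2) unfolding u_def a'_def by simp
  show ?thesis
  proof (cases "outR (h u) = 0")
    case True then show ?thesis using yB yr0 unfolding a'_def by simp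
  next
    case False
    then have o: "outR (h u) > 0" using outR_nn[of "h u"] by simp
    have "bv u * (yr a' / outR (h u)) \<le> outR (h u) * (yr a' / outR (h u))"
      by (rule mult_right_mono[OF le]) (use yr0 o in simp)
    also have "\<dots> = yr a'" using o by simp
    finally show ?thesis using yB unfolding a'_def by simp
  qed
qed

lemma lift_ok: "(x, yB) \<in> Fcap B"
proof -
  obtain a0 where a0: "a0 \<in> bdd_A R" "bdd_src R a0 = bdd_root R"
  proof -
    have "out_arcs R (bdd_root R) \<noteq> {}" using Fr(4) by auto
    then show ?thesis using that unfolding out_arcs_def by auto
  qed
  then have n1: "bdd_n R \<ge> 1" using bdd_facts(12)[OF RB a0(1)] bdd_facts(4)[OF RB] by auto
  have rtB: "bdd_root B \<noteq> bdd_term B" using n1 nn bdd_facts(4,6)[OF BB] by auto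
  have rtR: "bdd_root R \<noteq> bdd_term R" using n1 bdd_facts(4,6)[OF RB] by auto
  have c1: "\<forall>i\<in>{1..bdd_n B}. 0 \<le> x i \<and> x i \<le> 1" using Fr(1) nn by simp
  have c2: "\<forall>a\<in>bdd_A B. 0 \<le> yB a" using yB_nn by simp
  have c3: "\<forall>u\<in>bdd_N B - {bdd_root B, bdd_term B}. (\<Sum>a\<in>out_arcs B u. yB a) = (\<Sum>a\<in>in_arcs B u. yB a)"
    using out_sum_B in_sum_B by simp
  have c4: "(\<Sum>a\<in>out_arcs B (bdd_root B). yB a) = 1"
    using out_sum_B[OF bdd_facts(3)[OF BB] rtB] bdd_facts(4)[OF BB] unfolding bv_def by simp
  have PreT: "Pre (bdd_term R) = {bdd_term B}"
  proof (intro set_eqI iffI)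
    fix u assume u: "u \<in> Pre (bdd_term R)"
    then have "bdd_layer B u = bdd_n B + 1" using Pre_layer[OF u] bdd_facts(6)[OF RB] nn by simp
    then show "u \<in> {bdd_term B}" using u bdd_facts(9)[OF BB] unfolding Pre_def by auto
  next
    fix u assume "u \<in> {bdd_term B}"
    then show "u \<in> Pre (bdd_term R)" unfolding Pre_def using term_useful h_term bdd_facts(5)[OF BB] by auto
  qed
  have c5: "(\<Sum>a\<in>in_arcs B (bdd_term B). yB a) = 1"
  proof -
    have "(\<Sum>a\<in>in_arcs B (bdd_term B). yB a) = bv (bdd_term B)"
      using in_sum_B[OF bdd_facts(5)[OF BB]] rtB by simp
    also have "\<dots> = (\<Sum>u\<in>Pre (bdd_term R). bv u)" using PreT by simp
    also have "\<dots> = psi (bdd_term R)" using INV[OF bdd_facts(5)[OF RB]] .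
    also have "\<dots> = 1" unfolding psi_def using rtR Fr(5) by simp
    finally show ?thesis .
  qed
  have cap: "yB a \<le> x (bdd_layer B (bdd_src B a)) \<and> yB a \<le> 1 - x (bdd_layer B (bdd_src B a)) \<or>
       (a \<in> UA \<and> yB a \<le> yr (hA a) \<and> hA a \<in> bdd_A R \<and> bdd_label R (hA a) = bdd_label B a \<and>
        bdd_layer R (bdd_src R (hA a)) = bdd_layer B (bdd_src B a))" if a: "a \<in> bdd_A B" for a
  proof (cases "a \<in> UA")
    case False
    have "bdd_layer B (bdd_src B a) \<in> {1..bdd_n B}" using bdd_facts(12)[OF BB a] .
    then show ?thesis using c1 False unfolding yB_def by auto
  next
    case True
    have "bdd_layer R (bdd_src R (hA a)) = bdd_layer B (bdd_src B a)"
      using hA_props(2)[OF True] useful_h True unfolding UA_def by auto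
    then show ?thesis using True yB_le hA_props(1,3)[OF True] by auto
  qed
  have c6: "\<forall>a\<in>bdd_A B. bdd_label B a \<longrightarrow> yB a \<le> x (bdd_layer B (bdd_src B a))"
  proof (intro ballI impI)
    fix a assume a: "a \<in> bdd_A B" "bdd_label B a"
    show "yB a \<le> x (bdd_layer B (bdd_src B a))"
      using cap[OF a(1)] a(2) Fr(6) by fastforce
  qed
  have c7: "\<forall>a\<in>bdd_A B. \<not> bdd_label B a \<longrightarrow> yB a \<le> 1 - x (bdd_layer B (bdd_src B a))"
  proof (intro ballI impI)
    fix a assume a: "a \<in> bdd_A B" "\<not> bdd_label B a"
    show "yB a \<le> 1 - x (bdd_layer B (bdd_src B a))"
      using cap[OF a(1)] a(2) Fr(7) by fastforce
  qed
  show ?thesis unfolding Fcap_def using c1 c2 c3 c4 c5 c6 c7 by simp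
qed

end


theorem theorem4:
  fixes B :: "('v, 'a) bdd" and Br :: "('w, 'b) bdd"
  assumes "is_bdd B"
    and "is_reduced_bdd Br"
    and "bdd_n Br = bdd_n B"
    and "bdd_X Br = bdd_X B"
  shows "proj_x Br \<subseteq> proj_x B"
proof
  fix x assume "x \<in> proj_x Br"
  then obtain yr where F: "(x, yr) \<in> Fcap Br" unfolding proj_x_def by auto
  show "x \<in> proj_x B"
  proof (cases "bdd_X B = {}")
    case True
    then show ?thesis using empty_case[OF assms(2)] assms(4) F by simp
  next
    case False
    have RB: "is_bdd Br" using assms(2) unfolding is_reduced_bdd_def by simp
    have ne: "bdd_X Br \<noteq> {}" using False assms(4) by simp
    interpret L: lift B Br x yr
      using assms(1) RB assms(3) assms(4) False reduced_props[OF assms(2) ne] F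
      by (unfold_locales) auto
    show ?thesis unfolding proj_x_def using L.lift_ok by auto
  qed
qed

end
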